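(* Let $T$ be a non-degenerate T-graph, $F$ a spanning forest of $T$, and $F^\dagger$ its dual forest equipped with an orientation in which each connected component is oriented towards a chosen end. Then $M(F^\dagger)$ is a perfect matching of the hexagonal lattice $\mathcal H$.
   Context: Setup. $\mathcal H$ is the hexagonal lattice with black/white bipartition, $\mathcal H^\dagger$ its dual triangular lattice. A T-graph $T=\psi(\mathcal H^\dagger)\subset\mathbb C$ (built from a triangle $\Delta$ and a unit complex number $\lambda$) is such that each black vertex $b$ of $\mathcal H$ corresponds to a segment $\psi(b)$ and each white vertex $w$ to a triangular face $\psi(w)$ of $T$; if an edge of $T$ lies on $\psi(b)$ and on the boundary of $\psi(w)$ then $b$ and $w$ are adjacent in $\mathcal H$. Non-degenerate: every vertex of $T$ lies in exactly three segments, being an endpoint of two and in the interior of exactly one, and no face is degenerate; each segment contains exactly one vertex of $T$ in its interior. $T$ is a directed graph: from each vertex $v$ there are two outgoing edges, towards the two endpoints of the segment containing $v$ in its interior. A spanning forest $F$ of $T$ is a set of directed edges such that every vertex has exactly one outgoing edge in $F$ and $F$ contains no cycle even ignoring orientation. The dual $F^\dagger$ is the graph whose vertices are the faces of $T$, with an edge between two faces across each edge of $T$ not in $F$; it is a spanning forest with no finite component; each component is oriented towards a chosen end. Definition of $M(F^\dagger)$: for each white $w$, the unique outgoing edge of $F^\dagger$ from $\psi(w)$ crosses an edge of $T$ lying on a segment $\psi(b)$ with $b$ adjacent to $w$; $w$ is matched to this $b$. *)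

theory Defs
  imports "HOL-Analysis.Analysis"
begin

text \<open>Faces of H (= vertices of the triangular lattice H-dagger) are indexed by
  Z x Z (points i*u + j*v of the triangular lattice).  Black vertices of H are the
  upward triangles, white vertices the downward triangles, both indexed by Z x Z.\<close>

type_synonym face = "int \<times> int"
type_synonym black = "int \<times> int"
type_synonym white = "int \<times> int"

definition bfaces :: "black \<Rightarrow> face set" where
  "bfaces b = {(fst b, snd b), (fst b + 1, snd b), (fst b, snd b + 1)}"

definition wfaces :: "white \<Rightarrow> face set" where
  "wfaces w = {(fst w + 1, snd w), (fst w, snd w + 1), (fst w + 1, snd w + 1)}"

text \<open>Adjacency in H: two triangles sharing a side.\<close>
definition hex_adj :: "white \<Rightarrow> black \<Rightarrow> bool" where
  "hex_adj w b \<longleftrightarrow> w = b \<or> w = (fst b - 1, snd b) \<or> w = (fst b, snd b - 1)"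

definition seg :: "(face \<Rightarrow> complex) \<Rightarrow> black \<Rightarrow> complex set" where
  "seg \<psi> b = convex hull (\<psi> ` bfaces b)"

definition tri :: "(face \<Rightarrow> complex) \<Rightarrow> white \<Rightarrow> complex set" where
  "tri \<psi> w = convex hull (\<psi> ` wfaces w)"

definition Tverts :: "(face \<Rightarrow> complex) \<Rightarrow> complex set" where
  "Tverts \<psi> = range \<psi>"

definition T_edge :: "(face \<Rightarrow> complex) \<Rightarrow> complex \<times> complex \<Rightarrow> bool" where
  "T_edge \<psi> e \<longleftrightarrow> fst e \<in> Tverts \<psi> \<and> snd e \<in> Tverts \<psi> \<and>
     (\<exists>b. fst e \<in> rel_interior (seg \<psi> b) \<and> snd e \<in> seg \<psi> b - rel_interior (seg \<psi> b))"

definition edge_on_seg :: "(face \<Rightarrow> complex) \<Rightarrow> complex \<times> complex \<Rightarrow> black \<Rightarrow> bool" where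
  "edge_on_seg \<psi> e b \<longleftrightarrow> closed_segment (fst e) (snd e) \<subseteq> seg \<psi> b"

definition edge_on_face :: "(face \<Rightarrow> complex) \<Rightarrow> complex \<times> complex \<Rightarrow> white \<Rightarrow> bool" where
  "edge_on_face \<psi> e w \<longleftrightarrow> closed_segment (fst e) (snd e) \<subseteq> frontier (tri \<psi> w)"

definition is_Tgraph :: "(face \<Rightarrow> complex) \<Rightarrow> bool" where
  "is_Tgraph \<psi> \<longleftrightarrow>
     (\<forall>b. collinear (\<psi> ` bfaces b)) \<and>
     (\<forall>w. \<not> collinear (\<psi> ` wfaces w)) \<and>
     (\<forall>w w'. w \<noteq> w' \<longrightarrow> interior (tri \<psi> w) \<inter> interior (tri \<psi> w') = {}) \<and>
     (\<Union>w. tri \<psi> w) = UNIV \<and>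
     (\<forall>e b w. T_edge \<psi> e \<and> edge_on_seg \<psi> e b \<and> edge_on_face \<psi> e w \<longrightarrow> hex_adj w b)"

definition nondegenerate :: "(face \<Rightarrow> complex) \<Rightarrow> bool" where
  "nondegenerate \<psi> \<longleftrightarrow>
     (\<forall>p \<in> Tverts \<psi>.
        card {b. p \<in> seg \<psi> b} = 3 \<and>
        card {b. p \<in> seg \<psi> b - rel_interior (seg \<psi> b)} = 2 \<and>
        card {b. p \<in> rel_interior (seg \<psi> b)} = 1) \<and>
     (\<forall>w. \<not> collinear (\<psi> ` wfaces w)) \<and>
     (\<forall>b. card (Tverts \<psi> \<inter> rel_interior (seg \<psi> b)) = 1)"

definition und :: "(complex \<times> complex) set \<Rightarrow> complex \<Rightarrow> complex \<Rightarrow> bool" where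
  "und F p q \<longleftrightarrow> (p, q) \<in> F \<or> (q, p) \<in> F"

definition no_undirected_cycle :: "(complex \<times> complex) set \<Rightarrow> bool" where
  "no_undirected_cycle F \<longleftrightarrow>
     \<not> (\<exists>p q. (p, q) \<in> F \<and> (q, p) \<in> F) \<and>
     \<not> (\<exists>xs. length xs \<ge> 3 \<and> distinct xs \<and>
           (\<forall>i < length xs. und F (xs ! i) (xs ! ((i + 1) mod length xs))))"

definition spanning_forest :: "(face \<Rightarrow> complex) \<Rightarrow> (complex \<times> complex) set \<Rightarrow> bool" where
  "spanning_forest \<psi> F \<longleftrightarrow>
     (\<forall>e \<in> F. T_edge \<psi> e) \<and>
     (\<forall>v \<in> Tverts \<psi>. \<exists>!q. (v, q) \<in> F) \<and>
     no_undirected_cycle F"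

definition dual_adj :: "(face \<Rightarrow> complex) \<Rightarrow> (complex \<times> complex) set \<Rightarrow>
    white \<Rightarrow> complex \<times> complex \<Rightarrow> white \<Rightarrow> bool" where
  "dual_adj \<psi> F w e w' \<longleftrightarrow> T_edge \<psi> e \<and> e \<notin> F \<and> w \<noteq> w' \<and>
     edge_on_face \<psi> e w \<and> edge_on_face \<psi> e w'"

definition is_ray :: "(white \<Rightarrow> 'e \<Rightarrow> white \<Rightarrow> bool) \<Rightarrow> (nat \<Rightarrow> white) \<Rightarrow> (nat \<Rightarrow> 'e) \<Rightarrow> bool" where
  "is_ray adj x es \<longleftrightarrow> inj x \<and> (\<forall>k. adj (x k) (es k) (x (Suc k)))"

definition same_end :: "(nat \<Rightarrow> white) \<Rightarrow> (nat \<Rightarrow> white) \<Rightarrow> bool" where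
  "same_end x y \<longleftrightarrow> (\<exists>i j. \<forall>k. x (i + k) = y (j + k))"

definition connected_in :: "(white \<Rightarrow> 'e \<Rightarrow> white \<Rightarrow> bool) \<Rightarrow> white \<Rightarrow> white \<Rightarrow> bool" where
  "connected_in adj u v \<longleftrightarrow> (u, v) \<in> {(a, c). \<exists>e. adj a e c}\<^sup>*"

definition is_orientation :: "(white \<Rightarrow> 'e \<Rightarrow> white \<Rightarrow> bool) \<Rightarrow> (white \<Rightarrow> 'e \<Rightarrow> white \<Rightarrow> bool) \<Rightarrow> bool" where
  "is_orientation adj Or \<longleftrightarrow>
     (\<forall>u e v. Or u e v \<longrightarrow> adj u e v) \<and>
     (\<forall>u e v. adj u e v \<longrightarrow> Or u e v \<or> Or v e u) \<and>
     (\<forall>u e v. \<not> (Or u e v \<and> Or v e u))"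

definition oriented_towards_ends :: "(white \<Rightarrow> 'e \<Rightarrow> white \<Rightarrow> bool) \<Rightarrow> (white \<Rightarrow> 'e \<Rightarrow> white \<Rightarrow> bool) \<Rightarrow> bool" where
  "oriented_towards_ends adj Or \<longleftrightarrow> is_orientation adj Or \<and>
     (\<forall>w. \<exists>r rs. is_ray adj r rs \<and> connected_in adj w (r 0) \<and>
        (\<forall>u e v. connected_in adj w u \<and> adj u e v \<longrightarrow>
           (Or u e v \<longleftrightarrow> (\<exists>y ys. is_ray adj y ys \<and> y 0 = u \<and> ys 0 = e \<and> y 1 = v \<and> same_end y r))))"

definition M_of :: "(face \<Rightarrow> complex) \<Rightarrow> (white \<Rightarrow> complex \<times> complex \<Rightarrow> white \<Rightarrow> bool) \<Rightarrow>
    white \<Rightarrow> black \<Rightarrow> bool" where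
  "M_of \<psi> Or w b \<longleftrightarrow> hex_adj w b \<and> (\<exists>!p. Or w (fst p) (snd p)) \<and>
     (\<exists>e w'. Or w e w' \<and> edge_on_seg \<psi> e b)"

definition perfect_matching :: "(white \<Rightarrow> black \<Rightarrow> bool) \<Rightarrow> bool" where
  "perfect_matching M \<longleftrightarrow> (\<forall>w b. M w b \<longrightarrow> hex_adj w b) \<and>
     (\<forall>w. \<exists>!b. M w b) \<and> (\<forall>b. \<exists>!w. M w b)"

end

theory Submission
  imports Defs
begin

lemma hex_unique:
  assumes "hex_adj w b1" "hex_adj w b2" "hex_adj v b1" "hex_adj v b2" "w \<noteq> v"
  shows "b1 = b2"
  using assms unfolding hex_adj_def
  by (cases w; cases v; cases b1; cases b2) auto

lemma hull3_seg:
  fixes a b c :: complex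
  assumes "c \<in> closed_segment a b"
  shows "convex hull {a,b,c} = closed_segment a b"
proof
  show "convex hull {a,b,c} \<subseteq> closed_segment a b"
    by (rule hull_minimal) (use assms in auto)
  show "closed_segment a b \<subseteq> convex hull {a,b,c}"
    unfolding segment_convex_hull by (rule hull_mono) auto
qed

lemma tri_AB: "closed_segment (\<psi> (i,j)) (\<psi> (i+1,j)) \<subseteq> frontier (tri \<psi> (i, j - 1))"
proof -
  have "tri \<psi> (i, j - 1) = convex hull {\<psi>(i+1,j-1), \<psi>(i,j), \<psi>(i+1,j)}"
    by (simp add: tri_def wfaces_def)
  then show ?thesis by (auto simp add: frontier_of_triangle)
qed

lemma tri_AC: "closed_segment (\<psi> (i,j)) (\<psi> (i,j+1)) \<subseteq> frontier (tri \<psi> (i - 1, j))"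
proof -
  have "tri \<psi> (i - 1, j) = convex hull {\<psi>(i,j), \<psi>(i-1,j+1), \<psi>(i,j+1)}"
    by (simp add: tri_def wfaces_def)
  then show ?thesis by (simp add: frontier_of_triangle closed_segment_commute)
qed

lemma tri_BC: "closed_segment (\<psi> (i+1,j)) (\<psi> (i,j+1)) \<subseteq> frontier (tri \<psi> (i, j))"
proof -
  have "tri \<psi> (i, j) = convex hull {\<psi>(i+1,j), \<psi>(i,j+1), \<psi>(i+1,j+1)}"
    by (simp add: tri_def wfaces_def)
  then show ?thesis by (auto simp add: frontier_of_triangle)
qed

lemma seg_eq:
  assumes "collinear (\<psi> ` bfaces b)"
  shows "\<exists>X Y. X \<in> range \<psi> \<and> Y \<in> range \<psi> \<and> seg \<psi> b = closed_segment X Y"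
proof -
  obtain i j where b: "b = (i,j)" by (cases b)
  let ?A = "\<psi>(i,j)" and ?B = "\<psi>(i+1,j)" and ?C = "\<psi>(i,j+1)"
  have s: "seg \<psi> b = convex hull {?A,?B,?C}" by (simp add: seg_def bfaces_def b)
  have "collinear {?A,?B,?C}" using assms by (simp add: bfaces_def b)
  then consider "?A \<in> closed_segment ?B ?C" | "?B \<in> closed_segment ?C ?A" | "?C \<in> closed_segment ?A ?B"
    by (auto simp: collinear_between_cases between_mem_segment)
  then show ?thesis
  proof cases
    case 1 then have sb: "seg \<psi> b = closed_segment ?B ?C" using hull3_seg[OF 1] s by (simp add: insert_commute)
    then show ?thesis using rangeI by blast
  next
    case 2 then have sb: "seg \<psi> b = closed_segment ?C ?A" using hull3_seg[OF 2] s by (simp add: insert_commute)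
    then show ?thesis using rangeI by blast
  next
    case 3 then have sb: "seg \<psi> b = closed_segment ?A ?B" using hull3_seg[OF 3] s by (simp add: insert_commute)
    then show ?thesis using rangeI by blast
  qed
qed

lemma seg_diff:
  assumes "collinear (\<psi> ` bfaces b)"
  shows "\<exists>X Y. seg \<psi> b - rel_interior (seg \<psi> b) \<subseteq> {X,Y}"
proof -
  obtain X Y where "seg \<psi> b = closed_segment X Y" using seg_eq[OF assms] by blast
  then show ?thesis
    by (auto simp: rel_interior_closed_segment open_segment_def)
qed


lemma seg_convex: "convex (seg \<psi> b)" by (simp add: seg_def)

lemma Tedge_seg:
  assumes "fst e \<in> rel_interior (seg \<psi> b)" "snd e \<in> seg \<psi> b - rel_interior (seg \<psi> b)"
  shows "edge_on_seg \<psi> e b"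
  using assms rel_interior_subset[of "seg \<psi> b"] unfolding edge_on_seg_def
  by (intro closed_segment_subset seg_convex) auto

lemma generic_sides:
  fixes X Y Z p q :: complex
  assumes "Z \<in> closed_segment X Y" "p \<in> open_segment X Y" "q \<in> {X,Y}"
    "Z \<in> open_segment X Y \<Longrightarrow> Z = p"
  shows "closed_segment p q \<subseteq> closed_segment X Y \<and>
     (closed_segment p q \<subseteq> closed_segment X Z \<or> closed_segment p q \<subseteq> closed_segment Z Y)"
proof -
  have pc: "p \<in> closed_segment X Y" using assms(2) by (simp add: open_segment_def)
  have 1: "closed_segment p q \<subseteq> closed_segment X Y"
    using pc assms(3) by (auto simp: subset_closed_segment)
  show ?thesis
  proof (cases "Z \<in> open_segment X Y")
    case True
    then have "Z = p" by (rule assms(4))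
    then show ?thesis using 1 assms(3) by (auto simp: closed_segment_commute)
  next
    case False
    then have "Z = X \<or> Z = Y" using assms(1) by (auto simp: open_segment_def)
    then show ?thesis using 1 by auto
  qed
qed

lemma ray_shift: "is_ray adj y ys \<Longrightarrow> is_ray adj (\<lambda>k. y (n+k)) (\<lambda>k. ys (n+k))"
  unfolding is_ray_def inj_def by (simp (no_asm_simp)) (metis add_Suc_right add_left_cancel)

lemma same_end_shift: "same_end y r \<Longrightarrow> same_end (\<lambda>k. y (n+k)) r"
proof -
  assume "same_end y r"
  then obtain i j where h: "\<forall>k. y (i+k) = r (j+k)" by (auto simp: same_end_def)
  show ?thesis
  proof (cases "n \<le> i")
    case True
    then have "\<forall>k. y (n + ((i-n)+k)) = r (j+k)" using h by (simp add: add.assoc[symmetric])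
    then show ?thesis unfolding same_end_def by blast
  next
    case False
    then have "\<forall>k. y (n + k) = r ((j + (n - i))+k)" using h[rule_format, of "n - i + k" for k]
      by (simp add: add.assoc)
    then have "\<forall>k. y (n + (0 + k)) = r ((j + (n - i))+k)" by simp
    then show ?thesis unfolding same_end_def by blast
  qed
qed

lemma ray_prepend:
  assumes "is_ray adj y ys" "x \<notin> range y" "adj x e (y 0)"
  shows "is_ray adj (case_nat x y) (case_nat e ys)"
  unfolding is_ray_def
proof
  show "inj (case_nat x y)"
  proof (rule injI)
    fix a b assume "case_nat x y a = case_nat x y b"
    then show "a = b" using assms(1,2) unfolding is_ray_def
      by (cases a; cases b) (auto dest: injD)
  qed
  show "\<forall>k. adj (case_nat x y k) (case_nat e ys k) (case_nat x y (Suc k))"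
  proof
    fix k show "adj (case_nat x y k) (case_nat e ys k) (case_nat x y (Suc k))"
      using assms(1,3) unfolding is_ray_def by (cases k) auto
  qed
qed

lemma same_end_prepend: "same_end y r \<Longrightarrow> same_end (case_nat x y) r"
proof -
  assume "same_end y r"
  then obtain i j where h: "\<forall>k. y (i+k) = r (j+k)" by (auto simp: same_end_def)
  then have "\<forall>k. case_nat x y (Suc i + k) = r (j+k)" by simp
  then show ?thesis unfolding same_end_def by blast
qed

lemma same_end_refl: "same_end r r"
  unfolding same_end_def by (rule exI[of _ 0], rule exI[of _ 0]) simp

lemma same_end_combine:
  assumes "same_end y r" "same_end y' r"
  shows "\<exists>i j. \<forall>k. y (i+k) = y' (j+k)"
proof -
  obtain a c where h: "\<forall>k. y (a+k) = r (c+k)" using assms(1) by (auto simp: same_end_def)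
  obtain a' c' where h': "\<forall>k. y' (a'+k) = r (c'+k)" using assms(2) by (auto simp: same_end_def)
  define M where "M = max c c'"
  have "\<forall>k. y ((a + (M - c)) + k) = y' ((a' + (M - c')) + k)"
  proof
    fix k
    have "y ((a + (M - c)) + k) = r (c + (M - c + k))" using h[rule_format, of "M - c + k"] by (simp add: add.assoc)
    also have "\<dots> = r (M + k)" by (simp add: M_def)
    also have "\<dots> = r (c' + (M - c' + k))" by (simp add: M_def)
    also have "\<dots> = y' ((a' + (M - c')) + k)" using h'[rule_format, of "M - c' + k"] by (simp add: add.assoc)
    finally show "y ((a + (M - c)) + k) = y' ((a' + (M - c')) + k)" .
  qed
  then show ?thesis by blast
qed

lemma conn_step: "connected_in adj w u \<Longrightarrow> adj u e v \<Longrightarrow> connected_in adj w v"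
  unfolding connected_in_def by (rule rtrancl_into_rtrancl) auto

lemma conn_ray: "connected_in adj w (y 0) \<Longrightarrow> is_ray adj y ys \<Longrightarrow> connected_in adj w (y k)"
  by (induction k) (auto simp: is_ray_def intro: conn_step)

lemma conn_refl: "connected_in adj w w"
  unfolding connected_in_def by simp

lemma ray_to:
  assumes "is_ray adj r rs" "connected_in adj x (r 0)"
  shows "\<exists>y ys. is_ray adj y ys \<and> y 0 = x \<and> same_end y r"
  using assms(2)[unfolded connected_in_def]
proof (induction rule: converse_rtrancl_induct)
  case base
  then show ?case using assms(1) same_end_refl by blast
next
  case (step x x')
  then obtain e where e: "adj x e x'" by auto
  obtain y ys where y: "is_ray adj y ys" "y 0 = x'" "same_end y r" using step.IH by blast
  show ?case
  proof (cases "x \<in> range y")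
    case True
    then obtain n where "x = y n" by auto
    then show ?thesis using ray_shift[OF y(1), of n] same_end_shift[OF y(3), of n] by force
  next
    case False
    show ?thesis
      using ray_prepend[OF y(1) False, of e] e y(2) same_end_prepend[OF y(3), of x]
      by (intro exI[of _ "case_nat x y"] exI[of _ "case_nat e ys"]) auto
  qed
qed

locale TG =
  fixes \<psi> :: "face \<Rightarrow> complex" and F :: "(complex \<times> complex) set"
    and Or :: "white \<Rightarrow> complex \<times> complex \<Rightarrow> white \<Rightarrow> bool"
  assumes tg: "is_Tgraph \<psi>" and nd: "nondegenerate \<psi>" and sf: "spanning_forest \<psi> F"
    and ot: "oriented_towards_ends (dual_adj \<psi> F) Or"
begin

lemma coll: "collinear (\<psi> ` bfaces b)" using tg[unfolded is_Tgraph_def, THEN conjunct1] by blast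

lemma adjax: "T_edge \<psi> e \<Longrightarrow> edge_on_seg \<psi> e b \<Longrightarrow> edge_on_face \<psi> e w \<Longrightarrow> hex_adj w b"
  using tg[unfolded is_Tgraph_def, THEN conjunct2, THEN conjunct2, THEN conjunct2, THEN conjunct2] by blast

lemma Fedge: "v \<in> Tverts \<psi> \<Longrightarrow> \<exists>!q. (v,q) \<in> F"
  using sf[unfolded spanning_forest_def, THEN conjunct2, THEN conjunct1] by blast

lemma F_T: "e \<in> F \<Longrightarrow> T_edge \<psi> e"
  using sf[unfolded spanning_forest_def, THEN conjunct1] by blast

lemma rel_uniq:
  assumes "p \<in> Tverts \<psi>" "p \<in> rel_interior (seg \<psi> b1)" "p \<in> rel_interior (seg \<psi> b2)"
  shows "b1 = b2"
proof -
  have "card {b. p \<in> rel_interior (seg \<psi> b)} = 1" using bspec[OF nd[unfolded nondegenerate_def, THEN conjunct1] assms(1)] by (elim conjE)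
  then obtain c where "{b. p \<in> rel_interior (seg \<psi> b)} = {c}" by (rule card_1_singletonE)
  then show ?thesis using assms by (metis mem_Collect_eq singletonD)
qed

lemma vert_uniq:
  assumes "p \<in> Tverts \<psi>" "p \<in> rel_interior (seg \<psi> b)" "p' \<in> Tverts \<psi>" "p' \<in> rel_interior (seg \<psi> b)"
  shows "p = p'"
proof -
  have "card (Tverts \<psi> \<inter> rel_interior (seg \<psi> b)) = 1" using nd[unfolded nondegenerate_def, THEN conjunct2, THEN conjunct2] by blast
  then obtain c where "Tverts \<psi> \<inter> rel_interior (seg \<psi> b) = {c}" by (rule card_1_singletonE)
  then show ?thesis using assms by (metis IntI singletonD)
qed

lemma fits:
  assumes "T_edge \<psi> e" "edge_on_seg \<psi> e b" "edge_on_face \<psi> e w" "edge_on_face \<psi> e w'" "w \<noteq> w'"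
  shows "fst e \<in> rel_interior (seg \<psi> b) \<and> snd e \<in> seg \<psi> b - rel_interior (seg \<psi> b)"
proof -
  obtain b' where b': "fst e \<in> rel_interior (seg \<psi> b')" "snd e \<in> seg \<psi> b' - rel_interior (seg \<psi> b')"
    using assms(1) by (auto simp: T_edge_def)
  have s': "edge_on_seg \<psi> e b'" by (rule Tedge_seg[OF b'])
  have "b' = b"
    using hex_unique[OF adjax[OF assms(1) s' assms(3)] adjax[OF assms(1,2,3)]
        adjax[OF assms(1) s' assms(4)] adjax[OF assms(1,2,4)] assms(5)] .
  then show ?thesis using b' by simp
qed

lemma same_edge:
  assumes "T_edge \<psi> e1" "e1 \<notin> F" "fst e1 \<in> rel_interior (seg \<psi> b)" "snd e1 \<in> seg \<psi> b - rel_interior (seg \<psi> b)"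
    and "T_edge \<psi> e2" "e2 \<notin> F" "fst e2 \<in> rel_interior (seg \<psi> b)" "snd e2 \<in> seg \<psi> b - rel_interior (seg \<psi> b)"
  shows "e1 = e2"
proof -
  have t1: "fst e1 \<in> Tverts \<psi>" "snd e1 \<in> Tverts \<psi>" using assms(1) by (auto simp: T_edge_def)
  have t2: "fst e2 \<in> Tverts \<psi>" "snd e2 \<in> Tverts \<psi>" using assms(5) by (auto simp: T_edge_def)
  have pe: "fst e1 = fst e2" using vert_uniq t1 t2 assms(3,7) by blast
  define p where "p = fst e1"
  obtain q where q: "(p,q) \<in> F" using Fedge t1 p_def by blast
  obtain b' where b': "p \<in> rel_interior (seg \<psi> b')" "q \<in> seg \<psi> b' - rel_interior (seg \<psi> b')"
    using F_T[OF q] by (auto simp: T_edge_def)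
  have "b' = b" using rel_uniq[OF _ b'(1)] t1 assms(3) p_def by blast
  obtain X Y where XY: "seg \<psi> b - rel_interior (seg \<psi> b) \<subseteq> {X,Y}" using seg_diff[OF coll] by blast
  have "snd e1 \<noteq> q" using assms(2) q p_def by (cases e1) auto
  moreover have "snd e2 \<noteq> q" using assms(6) q p_def pe by (cases e2) auto
  moreover have "q \<in> {X,Y}" using b' \<open>b' = b\<close> XY by blast
  moreover have "snd e1 \<in> {X,Y}" "snd e2 \<in> {X,Y}" using assms(4,8) XY by blast+
  ultimately have "snd e1 = snd e2" by auto
  then show ?thesis using pe by (simp add: prod_eq_iff)
qed

lemma dual_sym: "dual_adj \<psi> F u e v \<Longrightarrow> dual_adj \<psi> F v e u"
  by (auto simp: dual_adj_def)

lemma multi_edge: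
  assumes "dual_adj \<psi> F u e1 v" "dual_adj \<psi> F u e2 v"
  shows "e1 = e2"
proof -
  have a1: "T_edge \<psi> e1" "e1 \<notin> F" "u \<noteq> v" "edge_on_face \<psi> e1 u" "edge_on_face \<psi> e1 v"
    using assms(1) by (auto simp: dual_adj_def)
  have a2: "T_edge \<psi> e2" "e2 \<notin> F" "edge_on_face \<psi> e2 u" "edge_on_face \<psi> e2 v"
    using assms(2) by (auto simp: dual_adj_def)
  obtain b1 where b1: "fst e1 \<in> rel_interior (seg \<psi> b1)" "snd e1 \<in> seg \<psi> b1 - rel_interior (seg \<psi> b1)"
    using a1(1) by (auto simp: T_edge_def)
  obtain b2 where b2: "fst e2 \<in> rel_interior (seg \<psi> b2)" "snd e2 \<in> seg \<psi> b2 - rel_interior (seg \<psi> b2)"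
    using a2(1) by (auto simp: T_edge_def)
  have s1: "edge_on_seg \<psi> e1 b1" by (rule Tedge_seg[OF b1])
  have s2: "edge_on_seg \<psi> e2 b2" by (rule Tedge_seg[OF b2])
  have "b1 = b2"
    using hex_unique[OF adjax[OF a1(1) s1 a1(4)] adjax[OF a2(1) s2 a2(3)]
        adjax[OF a1(1) s1 a1(5)] adjax[OF a2(1) s2 a2(4)] a1(3)] .
  then show ?thesis using same_edge[OF a1(1,2) b1 a2(1,2)] b2 by simp
qed

lemma exist_core:
  assumes "Z \<in> closed_segment X Y" "seg \<psi> b = closed_segment X Y"
    "X \<in> range \<psi>" "Y \<in> range \<psi>" "Z \<in> range \<psi>"
    "closed_segment X Y \<subseteq> frontier (tri \<psi> w1)"
    "closed_segment X Z \<subseteq> frontier (tri \<psi> w2)"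
    "closed_segment Z Y \<subseteq> frontier (tri \<psi> w3)" "w1 \<noteq> w2" "w1 \<noteq> w3"
  shows "\<exists>e w w'. T_edge \<psi> e \<and> e \<notin> F \<and> w \<noteq> w' \<and> edge_on_face \<psi> e w \<and>
     edge_on_face \<psi> e w' \<and> edge_on_seg \<psi> e b"
proof -
  have "card (Tverts \<psi> \<inter> rel_interior (seg \<psi> b)) = 1"
    using nd[unfolded nondegenerate_def, THEN conjunct2, THEN conjunct2] by blast
  then obtain p where p: "Tverts \<psi> \<inter> rel_interior (seg \<psi> b) = {p}" by (rule card_1_singletonE)
  then have pT: "p \<in> Tverts \<psi>" and pr: "p \<in> rel_interior (seg \<psi> b)" by auto
  obtain q where q: "(p,q) \<in> F" using Fedge pT by blast
  obtain b' where b': "p \<in> rel_interior (seg \<psi> b')" "q \<in> seg \<psi> b' - rel_interior (seg \<psi> b')"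
    using F_T[OF q] by (auto simp: T_edge_def)
  have "b' = b" using rel_uniq[OF pT b'(1) pr] .
  with b' have qd: "q \<in> seg \<psi> b - rel_interior (seg \<psi> b)" by simp
  have XY: "X \<noteq> Y"
  proof
    assume "X = Y"
    then have "seg \<psi> b - rel_interior (seg \<psi> b) = {}" using assms(2)
      by (simp add: rel_interior_closed_segment)
    then show False using qd by blast
  qed
  have ri: "rel_interior (seg \<psi> b) = open_segment X Y"
    using assms(2) XY by (simp add: rel_interior_closed_segment)
  have qXY: "q \<in> {X,Y}" using qd ri assms(2) by (auto simp: open_segment_def)
  define q' where "q' = (if q = X then Y else X)"
  have q'XY: "q' \<in> {X,Y}" and q'q: "q' \<noteq> q" using qXY XY by (auto simp: q'_def)
  have po: "p \<in> open_segment X Y" using pr ri by simp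
  have Zp: "Z = p" if "Z \<in> open_segment X Y"
    using p that ri assms(5) by (auto simp: Tverts_def)
  have G: "closed_segment p q' \<subseteq> closed_segment X Y \<and>
     (closed_segment p q' \<subseteq> closed_segment X Z \<or> closed_segment p q' \<subseteq> closed_segment Z Y)"
    by (rule generic_sides[OF assms(1) po q'XY Zp])
  define e where "e = (p, q')"
  have q'T: "q' \<in> Tverts \<psi>" using q'XY assms(3,4) by (auto simp: Tverts_def)
  have q'd: "q' \<in> seg \<psi> b - rel_interior (seg \<psi> b)"
    using q'XY ri assms(2) by (auto simp: open_segment_def)
  have Te: "T_edge \<psi> e" unfolding T_edge_def e_def using pT q'T pr q'd by (simp only: fst_conv snd_conv) blast
  have eF: "e \<notin> F" using Fedge[OF pT] q q'q by (auto simp: e_def)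
  have es: "edge_on_seg \<psi> e b" using G assms(2) by (simp add: edge_on_seg_def e_def)
  have f1: "edge_on_face \<psi> e w1" using G assms(6) by (auto simp: edge_on_face_def e_def)
  have "edge_on_face \<psi> e w2 \<or> edge_on_face \<psi> e w3" using G assms(7,8) by (auto simp: edge_on_face_def e_def)
  then show ?thesis using Te eF es f1 assms(9,10) by blast
qed

lemma exist_b:
  "\<exists>e w w'. T_edge \<psi> e \<and> e \<notin> F \<and> w \<noteq> w' \<and> edge_on_face \<psi> e w \<and>
     edge_on_face \<psi> e w' \<and> edge_on_seg \<psi> e b"
proof -
  obtain i j where b: "b = (i,j)" by (cases b)
  let ?A = "\<psi>(i,j)" and ?B = "\<psi>(i+1,j)" and ?C = "\<psi>(i,j+1)"
  have s: "seg \<psi> b = convex hull {?A,?B,?C}" by (simp add: seg_def bfaces_def b)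
  have "collinear {?A,?B,?C}" using coll[of b] by (simp add: bfaces_def b)
  then consider "?A \<in> closed_segment ?B ?C" | "?B \<in> closed_segment ?C ?A" | "?C \<in> closed_segment ?A ?B"
    by (auto simp: collinear_between_cases between_mem_segment)
  then show ?thesis
  proof cases
    case 1 then have sb: "seg \<psi> b = closed_segment ?B ?C" using hull3_seg[OF 1] s by (simp add: insert_commute)
    show ?thesis
      by (rule exist_core[OF 1 sb rangeI rangeI rangeI tri_BC[of \<psi> i j]])
         (use tri_AB[of \<psi> i j] tri_AC[of \<psi> i j] in \<open>auto simp: closed_segment_commute\<close>)
  next
    case 2 then have sb: "seg \<psi> b = closed_segment ?C ?A" using hull3_seg[OF 2] s by (simp add: insert_commute)
    show ?thesis
      by (rule exist_core[OF 2 sb rangeI rangeI rangeI])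
         (use tri_AB[of \<psi> i j] tri_AC[of \<psi> i j] tri_BC[of \<psi> i j] in \<open>auto simp: closed_segment_commute\<close>)
  next
    case 3 then have sb: "seg \<psi> b = closed_segment ?A ?B" using hull3_seg[OF 3] s by (simp add: insert_commute)
    show ?thesis
      by (rule exist_core[OF 3 sb rangeI rangeI rangeI])
         (use tri_AB[of \<psi> i j] tri_AC[of \<psi> i j] tri_BC[of \<psi> i j] in \<open>auto simp: closed_segment_commute\<close>)
  qed
qed

abbreviation "adj \<equiv> dual_adj \<psi> F"

definition good :: "white \<Rightarrow> (nat \<Rightarrow> white) \<Rightarrow> (nat \<Rightarrow> complex \<times> complex) \<Rightarrow> bool" where
  "good w r rs \<longleftrightarrow> is_ray adj r rs \<and> connected_in adj w (r 0) \<and>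
        (\<forall>u e v. connected_in adj w u \<and> adj u e v \<longrightarrow>
           (Or u e v \<longleftrightarrow> (\<exists>y ys. is_ray adj y ys \<and> y 0 = u \<and> ys 0 = e \<and> y 1 = v \<and> same_end y r)))"

lemma good_ex: "\<exists>r rs. good w r rs"
  using ot unfolding oriented_towards_ends_def good_def by blast

lemma orient: "is_orientation adj Or"
  using ot unfolding oriented_towards_ends_def by blast

lemma Or_adj: "Or u e v \<Longrightarrow> adj u e v"
  using orient unfolding is_orientation_def by blast

lemma Or_antisym: "Or u e v \<Longrightarrow> Or v e u \<Longrightarrow> False"
  using orient unfolding is_orientation_def by blast

lemma Or_total: "adj u e v \<Longrightarrow> Or u e v \<or> Or v e u"
  using orient unfolding is_orientation_def by blast

lemma good_iff: "good w r rs \<Longrightarrow> connected_in adj w u \<Longrightarrow> adj u e v \<Longrightarrow>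
   Or u e v \<longleftrightarrow> (\<exists>y ys. is_ray adj y ys \<and> y 0 = u \<and> ys 0 = e \<and> y 1 = v \<and> same_end y r)"
  unfolding good_def by blast

lemma forward:
  assumes "good w r rs" "is_ray adj y ys" "same_end y r" "connected_in adj w (y 0)"
  shows "Or (y k) (ys k) (y (Suc k))"
proof -
  have a: "adj (y k) (ys k) (y (Suc k))" using assms(2) by (simp add: is_ray_def)
  have c: "connected_in adj w (y k)" by (rule conn_ray[OF assms(4,2)])
  show ?thesis
  proof (rule iffD2[OF good_iff[OF assms(1) c a]])
    show "\<exists>y' ys'. is_ray adj y' ys' \<and> y' 0 = y k \<and> ys' 0 = ys k \<and> y' 1 = y (Suc k) \<and> same_end y' r"
      by (rule exI[of _ "\<lambda>t. y (k+t)"], rule exI[of _ "\<lambda>t. ys (k+t)"])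
         (simp add: ray_shift[OF assms(2)] same_end_shift[OF assms(3)])
  qed
qed

lemma identical:
  assumes "good w r rs" "is_ray adj y ys" "is_ray adj y' ys'" "y 0 = y' 0"
    "connected_in adj w (y 0)" "same_end y r" "same_end y' r" "\<forall>k. y (i+k) = y' (j+k)"
  shows "y k = y' k"
  using assms(2-)
proof (induction "i+j" arbitrary: y ys y' ys' i j k rule: less_induct)
  case less
  have injy: "inj y" and injy': "inj y'" using less.prems(1,2) by (auto simp: is_ray_def)
  show ?case
  proof (cases "i = 0 \<or> j = 0")
    case True
    have "i = 0 \<and> j = 0"
    proof (cases "i = 0")
      case True
      then have "y' j = y' 0" using less.prems(3,7) by (metis add_0 add.right_neutral)
      then show ?thesis using True injD[OF injy'] by blast
    next
      case False
      then have "j = 0" using \<open>i = 0 \<or> j = 0\<close> by simp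
      then have "y i = y 0" using less.prems(3,7) by (metis add_0 add.right_neutral)
      then show ?thesis using \<open>j = 0\<close> injD[OF injy] by blast
    qed
    then show ?thesis using less.prems(7) by simp
  next
    case False
    then have i1: "i \<ge> 1" and j1: "j \<ge> 1" by auto
    have ray1: "is_ray adj (\<lambda>t. y (1+t)) (\<lambda>t. ys (1+t))" by (rule ray_shift[OF less.prems(1)])
    have se1: "same_end (\<lambda>t. y (1+t)) r" by (rule same_end_shift[OF less.prems(5)])
    have c1: "connected_in adj w (y 1)" by (rule conn_ray[OF less.prems(4,1)])
    have c0': "connected_in adj w (y' 0)" using less.prems(3,4) by simp
    have yy: "y 1 \<noteq> y 0" using injD[OF injy, of 1 0] by auto
    have yy': "y' 1 \<noteq> y' 0" using injD[OF injy', of 1 0] by auto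
    show ?thesis
    proof (cases "y 1 = y' 1")
      case True
      have "(\<lambda>t. y (1+t)) m = (\<lambda>t. y' (1+t)) m" for m
      proof (rule less.hyps[of "i - 1" "j - 1" "\<lambda>t. y (1+t)" "\<lambda>t. ys (1+t)" "\<lambda>t. y' (1+t)" "\<lambda>t. ys' (1+t)" m])
        show "i - 1 + (j - 1) < i + j" using i1 j1 by simp
        show "is_ray adj (\<lambda>t. y (1+t)) (\<lambda>t. ys (1+t))" by (rule ray1)
        show "is_ray adj (\<lambda>t. y' (1+t)) (\<lambda>t. ys' (1+t))" by (rule ray_shift[OF less.prems(2)])
        show "(\<lambda>t. y (1+t)) 0 = (\<lambda>t. y' (1+t)) 0" using True by simp
        show "connected_in adj w ((\<lambda>t. y (1+t)) 0)" using c1 by simp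
        show "same_end (\<lambda>t. y (1+t)) r" by (rule se1)
        show "same_end (\<lambda>t. y' (1+t)) r" by (rule same_end_shift[OF less.prems(6)])
        show "\<forall>k. (\<lambda>t. y (1+t)) (i - 1 + k) = (\<lambda>t. y' (1+t)) (j - 1 + k)"
          using less.prems(7) i1 j1 by simp
      qed
      then show ?thesis using less.prems(3) by (cases k) auto
    next
      case ne: False
      have ex1: "y 1 \<in> range y'"
      proof (rule ccontr)
        assume nr: "y 1 \<notin> range y'"
        have a0: "adj (y 0) (ys 0) (y 1)" using less.prems(1) by (simp add: is_ray_def)
        have a: "adj (y 1) (ys 0) (y' 0)" using dual_sym[OF a0] less.prems(3) by simp
        have "Or (y 1) (ys 0) (y 0)"
          using good_iff[OF assms(1) c1 a] ray_prepend[OF less.prems(2) nr a] same_end_prepend[OF less.prems(6), of "y 1"]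
            less.prems(3)
          by (intro iffD2[OF good_iff[OF assms(1) c1 a, unfolded less.prems(3)[symmetric]]])
             (rule exI[of _ "case_nat (y 1) y'"], rule exI[of _ "case_nat (ys 0) ys'"], simp)
        moreover have "Or (y 0) (ys 0) (y 1)" using forward[OF assms(1) less.prems(1,5,4), of 0] by simp
        ultimately show False using Or_antisym by blast
      qed
      have ex2: "y' 1 \<in> range y"
      proof (rule ccontr)
        assume nr: "y' 1 \<notin> range y"
        have c1': "connected_in adj w (y' 1)" by (rule conn_ray[OF c0' less.prems(2)])
        have a0: "adj (y' 0) (ys' 0) (y' 1)" using less.prems(2) by (simp add: is_ray_def)
        have a: "adj (y' 1) (ys' 0) (y 0)" using dual_sym[OF a0] less.prems(3) by simp
        have "Or (y' 1) (ys' 0) (y' 0)"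
          using ray_prepend[OF less.prems(1) nr a] same_end_prepend[OF less.prems(5), of "y' 1"]
            less.prems(3)
          by (intro iffD2[OF good_iff[OF assms(1) c1' a, unfolded less.prems(3)]])
             (rule exI[of _ "case_nat (y' 1) y"], rule exI[of _ "case_nat (ys' 0) ys"], simp)
        moreover have "Or (y' 0) (ys' 0) (y' 1)" using forward[OF assms(1) less.prems(2,6) c0', of 0] by simp
        ultimately show False using Or_antisym by blast
      qed
      obtain k1 where k1: "y 1 = y' k1" using ex1 by auto
      obtain l1 where l1: "y' 1 = y l1" using ex2 by auto
      have k1_2: "k1 \<ge> 2"
      proof -
        have "k1 \<noteq> 0" using k1 yy less.prems(3) by metis
        moreover have "k1 \<noteq> 1" using k1 ne by auto
        ultimately show ?thesis by linarith
      qed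
      have l1_2: "l1 \<ge> 2"
      proof -
        have "l1 \<noteq> 0" using l1 yy' less.prems(3) by metis
        moreover have "l1 \<noteq> 1" using l1 ne by auto
        ultimately show ?thesis by linarith
      qed
      have jk: "j \<ge> k1"
      proof (rule ccontr)
        assume "\<not> j \<ge> k1"
        then have "y' k1 = y (i + (k1 - j))" using less.prems(7)[rule_format, of "k1 - j"] by simp
        then have "1 = i + (k1 - j)" using k1 injD[OF injy] by metis
        then show False using i1 \<open>\<not> j \<ge> k1\<close> by simp
      qed
      have sh: "(\<lambda>t. y (1+t)) m = (\<lambda>t. y' (k1+t)) m" for m
      proof (rule less.hyps[of "i - 1" "j - k1" "\<lambda>t. y (1+t)" "\<lambda>t. ys (1+t)" "\<lambda>t. y' (k1+t)" "\<lambda>t. ys' (k1+t)" m])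
        show "i - 1 + (j - k1) < i + j" using i1 k1_2 jk by simp
        show "is_ray adj (\<lambda>t. y (1+t)) (\<lambda>t. ys (1+t))" by (rule ray1)
        show "is_ray adj (\<lambda>t. y' (k1+t)) (\<lambda>t. ys' (k1+t))" by (rule ray_shift[OF less.prems(2)])
        show "(\<lambda>t. y (1+t)) 0 = (\<lambda>t. y' (k1+t)) 0" using k1 by simp
        show "connected_in adj w ((\<lambda>t. y (1+t)) 0)" using c1 by simp
        show "same_end (\<lambda>t. y (1+t)) r" by (rule se1)
        show "same_end (\<lambda>t. y' (k1+t)) r" by (rule same_end_shift[OF less.prems(6)])
        show "\<forall>k. (\<lambda>t. y (1+t)) (i - 1 + k) = (\<lambda>t. y' (k1+t)) (j - k1 + k)"
          using less.prems(7) i1 jk by simp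
      qed
      have "y l1 = y' (k1 + (l1 - 1))" using sh[of "l1 - 1"] l1_2 by simp
      then have "y' 1 = y' (k1 + (l1 - 1))" using l1 by simp
      then have "1 = k1 + (l1 - 1)" using injD[OF injy'] by metis
      then show ?thesis using k1_2 l1_2 by simp
    qed
  qed
qed

lemma out_ex: "\<exists>e v. Or w e v"
proof -
  obtain r rs where g: "good w r rs" using good_ex by blast
  then have "is_ray adj r rs" "connected_in adj w (r 0)" by (auto simp: good_def)
  then obtain y ys where y: "is_ray adj y ys" "y 0 = w" "same_end y r" using ray_to by blast
  have c0: "connected_in adj w (y 0)" using y(2) conn_refl[of adj w] by simp
  have "Or (y 0) (ys 0) (y (Suc 0))"
    using forward[OF g y(1,3) c0] by simp
  then show ?thesis using y(2) by blast
qed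

lemma out_uniq:
  assumes "Or w e1 v1" "Or w e2 v2"
  shows "e1 = e2 \<and> v1 = v2"
proof -
  obtain r rs where g: "good w r rs" using good_ex by blast
  obtain y ys where y: "is_ray adj y ys" "y 0 = w" "ys 0 = e1" "y 1 = v1" "same_end y r"
    using good_iff[OF g conn_refl Or_adj[OF assms(1)]] assms(1) by blast
  obtain y' ys' where y': "is_ray adj y' ys'" "y' 0 = w" "ys' 0 = e2" "y' 1 = v2" "same_end y' r"
    using good_iff[OF g conn_refl Or_adj[OF assms(2)]] assms(2) by blast
  obtain i j where ij: "\<forall>k. y (i+k) = y' (j+k)" using same_end_combine[OF y(5) y'(5)] by blast
  have "y 1 = y' 1"
    by (rule identical[OF g y(1) y'(1) _ _ y(5) y'(5) ij]) (use y y' conn_refl[of adj w] in auto)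
  then have v: "v1 = v2" using y y' by simp
  have "e1 = e2" using multi_edge[OF Or_adj[OF assms(1)] Or_adj[OF assms(2)[unfolded v[symmetric]]]] .
  then show ?thesis using v by simp
qed

lemma no_cycle3:
  assumes "Or a e1 b" "Or b e2 c" "Or c e3 a"
  shows False
proof -
  obtain r rs where g: "good a r rs" using good_ex by blast
  obtain y ys where y: "is_ray adj y ys" "y 0 = a" "ys 0 = e1" "y 1 = b" "same_end y r"
    using good_iff[OF g conn_refl Or_adj[OF assms(1)]] assms(1) by blast
  have c0: "connected_in adj a (y 0)" using y(2) conn_refl[of adj a] by simp
  have "Or (y 1) (ys 1) (y 2)" using forward[OF g y(1,5) c0, of 1] by (simp add: numeral_2_eq_2)
  then have y2: "y 2 = c" using out_uniq[OF _ assms(2)] y(4) by simp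
  have "Or (y 2) (ys 2) (y 3)" using forward[OF g y(1,5) c0, of 2] by (simp add: numeral_3_eq_3 numeral_2_eq_2)
  then have "y 3 = a" using out_uniq[OF _ assms(3)] y2 by simp
  then have "y 3 = y 0" using y(2) by simp
  then show False using y(1) unfolding is_ray_def by (metis injD zero_neq_numeral)
qed

lemma match_uniq_aux:
  assumes "Or w1 e w1'" "Or w2 e w2'" "w1 \<noteq> w2" "Or w1 e w2"
  shows False
proof -
  have "w2 = w1'" using out_uniq[OF assms(4,1)] by simp
  have a1: "adj w1 e w1'" and a2: "adj w2 e w2'" using Or_adj assms(1,2) by auto
  show False
  proof (cases "w2' = w1")
    case True then show False using Or_antisym assms(1,2) \<open>w2 = w1'\<close> by blast
  next
    case False
    have "adj w1 e w2'" using a1 a2 False by (auto simp: dual_adj_def)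
    then have "Or w1 e w2' \<or> Or w2' e w1" by (rule Or_total)
    then show False
    proof
      assume "Or w1 e w2'"
      then have "w2' = w1'" using out_uniq[OF _ assms(1)] by simp
      then show False using a2 \<open>w2 = w1'\<close> by (auto simp: dual_adj_def)
    next
      assume "Or w2' e w1"
      then show False using no_cycle3 assms(1,2) \<open>w2 = w1'\<close> by blast
    qed
  qed
qed

theorem main: "perfect_matching (M_of \<psi> Or)"
  unfolding perfect_matching_def
proof (intro conjI allI impI)
  fix w b assume "M_of \<psi> Or w b" then show "hex_adj w b" by (simp add: M_of_def)
next
  fix w
  have eu: "\<exists>!p. Or w (fst p) (snd p)"
  proof -
    obtain e v where ev: "Or w e v" using out_ex by blast
    show ?thesis
    proof (rule ex1I[of _ "(e,v)"])
      show "Or w (fst (e, v)) (snd (e, v))" using ev by simp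
      fix p assume "Or w (fst p) (snd p)"
      then show "p = (e,v)" using out_uniq[OF _ ev] by (cases p) auto
    qed
  qed
  obtain e v where ev: "Or w e v" using out_ex by blast
  have a: "adj w e v" by (rule Or_adj[OF ev])
  then have Te: "T_edge \<psi> e" and fw: "edge_on_face \<psi> e w" and fv: "edge_on_face \<psi> e v" and wv: "w \<noteq> v"
    by (auto simp: dual_adj_def)
  obtain b0 where b0: "fst e \<in> rel_interior (seg \<psi> b0)" "snd e \<in> seg \<psi> b0 - rel_interior (seg \<psi> b0)"
    using Te by (auto simp: T_edge_def)
  have s0: "edge_on_seg \<psi> e b0" by (rule Tedge_seg[OF b0])
  show "\<exists>!b. M_of \<psi> Or w b"
  proof (rule ex1I[of _ b0])
    show "M_of \<psi> Or w b0" unfolding M_of_def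
      by (rule conjI, rule adjax[OF Te s0 fw], rule conjI, rule eu, rule exI[of _ e], rule exI[of _ v],
          rule conjI, rule ev, rule s0)
    fix b assume "M_of \<psi> Or w b"
    then obtain e' v' where o: "Or w e' v'" and s: "edge_on_seg \<psi> e' b" unfolding M_of_def by blast
    have "e' = e" using out_uniq[OF o ev] by simp
    then have eb: "edge_on_seg \<psi> e b" using s by simp
    show "b = b0"
      by (rule hex_unique[OF adjax[OF Te eb fw] adjax[OF Te s0 fw]
          adjax[OF Te eb fv] adjax[OF Te s0 fv] wv])
  qed
next
  fix b
  have eu: "\<exists>!p. Or w (fst p) (snd p)" for w
  proof -
    obtain e v where ev: "Or w e v" using out_ex by blast
    show ?thesis
    proof (rule ex1I[of _ "(e,v)"])
      show "Or w (fst (e, v)) (snd (e, v))" using ev by simp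
      fix p assume "Or w (fst p) (snd p)"
      then show "p = (e,v)" using out_uniq[OF _ ev] by (cases p) auto
    qed
  qed
  obtain e w w' where ex: "T_edge \<psi> e" "e \<notin> F" "w \<noteq> w'" "edge_on_face \<psi> e w"
     "edge_on_face \<psi> e w'" "edge_on_seg \<psi> e b" using exist_b by blast
  have "adj w e w'" using ex by (simp add: dual_adj_def)
  then have "Or w e w' \<or> Or w' e w" by (rule Or_total)
  then obtain u u' where u: "Or u e u'" "edge_on_face \<psi> e u" by (metis ex(4,5))
  have Mu: "M_of \<psi> Or u b" unfolding M_of_def
    by (rule conjI, rule adjax[OF ex(1,6) u(2)], rule conjI, rule eu, rule exI[of _ e], rule exI[of _ u'],
          rule conjI, rule u(1), rule ex(6))
  show "\<exists>!w. M_of \<psi> Or w b"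
  proof (rule ex1I[of _ u])
    show "M_of \<psi> Or u b" by (rule Mu)
    have fact: "x = u" if Mx: "M_of \<psi> Or x b" and Mu2: "M_of \<psi> Or u b" for x u
    proof -
      obtain e1 x' where x: "Or x e1 x'" "edge_on_seg \<psi> e1 b" using Mx unfolding M_of_def by blast
      obtain e2 u' where uu: "Or u e2 u'" "edge_on_seg \<psi> e2 b" using Mu2 unfolding M_of_def by blast
      have d1: "adj x e1 x'" by (rule Or_adj[OF x(1)])
      have d2: "adj u e2 u'" by (rule Or_adj[OF uu(1)])
      have f1: "fst e1 \<in> rel_interior (seg \<psi> b) \<and> snd e1 \<in> seg \<psi> b - rel_interior (seg \<psi> b)"
        using fits[of e1 b x x'] d1 x(2) by (auto simp: dual_adj_def)
      have f2: "fst e2 \<in> rel_interior (seg \<psi> b) \<and> snd e2 \<in> seg \<psi> b - rel_interior (seg \<psi> b)"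
        using fits[of e2 b u u'] d2 uu(2) by (auto simp: dual_adj_def)
      have "e1 = e2"
        using same_edge[of e1 b e2] d1 d2 f1 f2 by (auto simp: dual_adj_def)
      show "x = u"
      proof (rule ccontr)
        assume xu: "x \<noteq> u"
        have "adj x e1 u" using d1 d2 xu \<open>e1 = e2\<close> by (auto simp: dual_adj_def)
        then have "Or x e1 u \<or> Or u e1 x" by (rule Or_total)
        then show False
        proof
          assume "Or x e1 u" then show False
            using match_uniq_aux[OF x(1) uu(1)[folded \<open>e1 = e2\<close>] xu] by blast
        next
          assume "Or u e1 x" then show False
            using match_uniq_aux[OF uu(1)[folded \<open>e1 = e2\<close>] x(1)] xu by blast
        qed
      qed
    qed
    fix x assume "M_of \<psi> Or x b"
    then show "x = u" using fact Mu by blast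
  qed
qed

end

theorem mainTheorem7:
  fixes \<psi> :: "face \<Rightarrow> complex"
    and F :: "(complex \<times> complex) set"
    and Or :: "white \<Rightarrow> complex \<times> complex \<Rightarrow> white \<Rightarrow> bool"
  assumes "is_Tgraph \<psi>"
    and "nondegenerate \<psi>"
    and "spanning_forest \<psi> F"
    and "oriented_towards_ends (dual_adj \<psi> F) Or"
  shows "perfect_matching (M_of \<psi> Or)"
proof -
  interpret TG \<psi> F Or using assms by unfold_locales
  show ?thesis by (rule main)
qed

end
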